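(* If a monoid $M$ is the limit of an inductive system of strongly sofic monoids, then $M$ is strongly sofic.
   Context: An inductive system of monoids $(M_i,\psi_{ji})$ consists of a directed set $I$, monoids $M_i$ ($i\in I$), and monoid morphisms $\psi_{ji}\colon M_i\to M_j$ for $i\le j$ with $\psi_{ii}=\mathrm{Id}$ and $\psi_{kj}\circ\psi_{ji}=\psi_{ki}$ for $i\le j\le k$. Its limit is $\coprod_i M_i/\sim$, where $x_i\sim x_j$ ($x_i\in M_i$, $x_j\in M_j$) iff $\psi_{\ell i}(x_i)=\psi_{\ell j}(x_j)$ for some $\ell\ge i,j$, with multiplication $[x_i][y_j]=[\psi_{\ell i}(x_i)\psi_{\ell j}(y_j)]$ for $\ell\ge i,j$. Hamming metric on $\operatorname{Map}(D)$ (maps $D\to D$, $D$ finite non-empty): $d_D^{\mathrm{Ham}}(f,g)=\frac{1}{|D|}|\{v:f(v)\ne g(v)\}|$. A monoid $M$ is strongly sofic if for every finite $K\subset M$ there is an integer $\Delta_K\ge1$ such that for every $\varepsilon>0$ there exist a non-empty finite set $D$ and a map $\sigma\colon M\to\operatorname{Map}(D)$ with (1) $\sigma(1_M)=\mathrm{Id}_D$; (2) $d_D^{\mathrm{Ham}}(\sigma(k_1k_2),\sigma(k_1)\sigma(k_2))\le\varepsilon$ for $k_1,k_2\in K$; (3) $d_D^{\mathrm{Ham}}(\sigma(k_1),\sigma(k_2))\ge1-\varepsilon$ for distinct $k_1,k_2\in K$; (4) $|\sigma(k)^{-1}(v)|\le\Delta_K$ for $k\in K$, $v\in D$. *)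

theory Defs
  imports "HOL-Algebra.Group" Complex_Main
begin

text \<open>Hamming distance on maps of a finite set D (maps D to D are represented
  as functions nat to nat that send D into D; D is a finite subset of nat).\<close>
definition ham_dist :: "nat set \<Rightarrow> (nat \<Rightarrow> nat) \<Rightarrow> (nat \<Rightarrow> nat) \<Rightarrow> real" where
  "ham_dist D f g = real (card {v \<in> D. f v \<noteq> g v}) / real (card D)"

definition strongly_sofic :: "('b, 'c) monoid_scheme \<Rightarrow> bool" where
  "strongly_sofic M \<longleftrightarrow>
     (\<forall>K. finite K \<and> K \<subseteq> carrier M \<longrightarrow>
        (\<exists>\<Delta>::nat. \<Delta> \<ge> 1 \<and>
          (\<forall>\<epsilon>::real. \<epsilon> > 0 \<longrightarrow>
            (\<exists>(D::nat set) (\<sigma>::'b \<Rightarrow> nat \<Rightarrow> nat).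
               finite D \<and> D \<noteq> {} \<and>
               (\<forall>m \<in> carrier M. \<sigma> m \<in> D \<rightarrow>\<^sub>E D) \<and>
               \<sigma> \<one>\<^bsub>M\<^esub> = restrict id D \<and>
               (\<forall>k1 \<in> K. \<forall>k2 \<in> K.
                  ham_dist D (\<sigma> (k1 \<otimes>\<^bsub>M\<^esub> k2)) (\<sigma> k1 \<circ> \<sigma> k2) \<le> \<epsilon>) \<and>
               (\<forall>k1 \<in> K. \<forall>k2 \<in> K. k1 \<noteq> k2 \<longrightarrow>
                  ham_dist D (\<sigma> k1) (\<sigma> k2) \<ge> 1 - \<epsilon>) \<and>
               (\<forall>k \<in> K. \<forall>v \<in> D. card {u \<in> D. \<sigma> k u = v} \<le> \<Delta>)))))"

text \<open>Directed set: a preorder on I in which any two elements have an upper bound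
  (I non-empty, so that every finite subset has an upper bound).\<close>
definition directed_set :: "'i set \<Rightarrow> ('i \<Rightarrow> 'i \<Rightarrow> bool) \<Rightarrow> bool" where
  "directed_set I leq \<longleftrightarrow> I \<noteq> {} \<and>
     (\<forall>i \<in> I. leq i i) \<and>
     (\<forall>i \<in> I. \<forall>j \<in> I. \<forall>k \<in> I. leq i j \<longrightarrow> leq j k \<longrightarrow> leq i k) \<and>
     (\<forall>i \<in> I. \<forall>j \<in> I. \<exists>k \<in> I. leq i k \<and> leq j k)"

definition inductive_system ::
  "'i set \<Rightarrow> ('i \<Rightarrow> 'i \<Rightarrow> bool) \<Rightarrow> ('i \<Rightarrow> 'a monoid) \<Rightarrow> ('i \<Rightarrow> 'i \<Rightarrow> 'a \<Rightarrow> 'a) \<Rightarrow> bool" where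
  "inductive_system I leq Ms psi \<longleftrightarrow> directed_set I leq \<and>
     (\<forall>i \<in> I. monoid (Ms i)) \<and>
     (\<forall>i \<in> I. \<forall>j \<in> I. leq i j \<longrightarrow>
         psi j i \<in> hom (Ms i) (Ms j) \<and> psi j i \<one>\<^bsub>Ms i\<^esub> = \<one>\<^bsub>Ms j\<^esub>) \<and>
     (\<forall>i \<in> I. \<forall>x \<in> carrier (Ms i). psi i i x = x) \<and>
     (\<forall>i \<in> I. \<forall>j \<in> I. \<forall>k \<in> I. leq i j \<longrightarrow> leq j k \<longrightarrow>
         (\<forall>x \<in> carrier (Ms i). psi k j (psi j i x) = psi k i x))"

definition dlim_rel ::
  "'i set \<Rightarrow> ('i \<Rightarrow> 'i \<Rightarrow> bool) \<Rightarrow> ('i \<Rightarrow> 'a monoid) \<Rightarrow> ('i \<Rightarrow> 'i \<Rightarrow> 'a \<Rightarrow> 'a) \<Rightarrow> (('i \<times> 'a) \<times> ('i \<times> 'a)) set" where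
  "dlim_rel I leq Ms psi = {((i, x), (j, y)). i \<in> I \<and> j \<in> I \<and> x \<in> carrier (Ms i) \<and> y \<in> carrier (Ms j) \<and>
       (\<exists>l \<in> I. leq i l \<and> leq j l \<and> psi l i x = psi l j y)}"

text \<open>The limit monoid: classes of the disjoint union modulo ~, with
  [x_i][y_j] = [psi l i x_i * psi l j y_j] for l >= i, j, and unit [1_{M_i}].\<close>
definition dlim ::
  "'i set \<Rightarrow> ('i \<Rightarrow> 'i \<Rightarrow> bool) \<Rightarrow> ('i \<Rightarrow> 'a monoid) \<Rightarrow> ('i \<Rightarrow> 'i \<Rightarrow> 'a \<Rightarrow> 'a) \<Rightarrow> ('i \<times> 'a) set monoid" where
  "dlim I leq Ms psi =
     \<lparr> carrier = (SIGMA i:I. carrier (Ms i)) // dlim_rel I leq Ms psi,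
       mult = (\<lambda>A B. SOME C. \<exists>i x j y l. (i, x) \<in> A \<and> (j, y) \<in> B \<and> l \<in> I \<and> leq i l \<and> leq j l \<and>
                 C = dlim_rel I leq Ms psi `` {(l, psi l i x \<otimes>\<^bsub>Ms l\<^esub> psi l j y)}),
       one = dlim_rel I leq Ms psi `` {(SOME i. i \<in> I, \<one>\<^bsub>Ms (SOME i. i \<in> I)\<^esub>)} \<rparr>"

end

theory Submission
  imports Defs
begin

lemma dsD1: "directed_set I leq \<Longrightarrow> I \<noteq> {}" unfolding directed_set_def by (elim conjE) assumption
lemma dsD2: "directed_set I leq \<Longrightarrow> \<forall>i \<in> I. leq i i" unfolding directed_set_def by (elim conjE) assumption
lemma dsD3: "directed_set I leq \<Longrightarrow> \<forall>i \<in> I. \<forall>j \<in> I. \<forall>k \<in> I. leq i j \<longrightarrow> leq j k \<longrightarrow> leq i k" unfolding directed_set_def by (elim conjE) assumption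
lemma dsD4: "directed_set I leq \<Longrightarrow> \<forall>i \<in> I. \<forall>j \<in> I. \<exists>k \<in> I. leq i k \<and> leq j k" unfolding directed_set_def by (elim conjE) assumption
lemma ds_ub: "directed_set I leq \<Longrightarrow> i \<in> I \<Longrightarrow> j \<in> I \<Longrightarrow> \<exists>k \<in> I. leq i k \<and> leq j k"
  using dsD4 by blast

lemma directed_finite:
  assumes dir: "directed_set I leq" and fin: "finite P"
    and ex: "\<forall>p\<in>P. \<exists>m\<in>I. Q p m"
    and up: "\<forall>p\<in>P. \<forall>m\<in>I. \<forall>n\<in>I. Q p m \<longrightarrow> leq m n \<longrightarrow> Q p n"
  shows "\<exists>l\<in>I. \<forall>p\<in>P. Q p l"
  using fin ex up
proof (induction P rule: finite_induct)
  case empty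
  have "I \<noteq> {}" using dsD1[OF dir] .
  then show ?case by auto
next
  case (insert p P)
  have exP: "\<forall>q\<in>P. \<exists>m\<in>I. Q q m" using insert.prems(1) by blast
  have upP: "\<forall>q\<in>P. \<forall>m\<in>I. \<forall>n\<in>I. Q q m \<longrightarrow> leq m n \<longrightarrow> Q q n"
    using insert.prems(2) by blast
  obtain l where l: "l \<in> I" "\<forall>q\<in>P. Q q l" using insert.IH[OF exP upP] by blast
  obtain m where m: "m \<in> I" "Q p m" using insert.prems(1) by auto
  obtain k where k: "k \<in> I" "leq l k" "leq m k" using ds_ub[OF dir l(1) m(1)] by blast
  have upp: "\<forall>m\<in>I. \<forall>n\<in>I. Q p m \<longrightarrow> leq m n \<longrightarrow> Q p n" using insert.prems(2) by blast
  have "Q p k" using upp m k by blast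
  moreover have "\<forall>q\<in>P. Q q k"
  proof
    fix q assume q: "q \<in> P"
    have "Q q l" using l q by blast
    thus "Q q k" using upP q l k by blast
  qed
  ultimately show ?case using k by auto
qed

locale isys =
  fixes I :: "'i set" and leq :: "'i \<Rightarrow> 'i \<Rightarrow> bool"
    and Ms :: "'i \<Rightarrow> 'a monoid" and psi :: "'i \<Rightarrow> 'i \<Rightarrow> 'a \<Rightarrow> 'a"
  assumes sys: "inductive_system I leq Ms psi"
begin

abbreviation "r \<equiv> dlim_rel I leq Ms psi"
abbreviation "L \<equiv> dlim I leq Ms psi"
abbreviation "SG \<equiv> (SIGMA i:I. carrier (Ms i))"

lemma sysD1: "directed_set I leq" using sys unfolding inductive_system_def by (elim conjE) assumption
lemma sysD2: "\<forall>i \<in> I. monoid (Ms i)" using sys unfolding inductive_system_def by (elim conjE) assumption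
lemma sysD3: "\<forall>i \<in> I. \<forall>j \<in> I. leq i j \<longrightarrow> psi j i \<in> hom (Ms i) (Ms j) \<and> psi j i \<one>\<^bsub>Ms i\<^esub> = \<one>\<^bsub>Ms j\<^esub>" using sys unfolding inductive_system_def by (elim conjE) assumption
lemma sysD4: "\<forall>i \<in> I. \<forall>x \<in> carrier (Ms i). psi i i x = x" using sys unfolding inductive_system_def by (elim conjE) assumption
lemma sysD5: "\<forall>i \<in> I. \<forall>j \<in> I. \<forall>k \<in> I. leq i j \<longrightarrow> leq j k \<longrightarrow> (\<forall>x \<in> carrier (Ms i). psi k j (psi j i x) = psi k i x)" using sys unfolding inductive_system_def by (elim conjE) assumption

lemma dir: "directed_set I leq" by (rule sysD1)
lemma mon: "i \<in> I \<Longrightarrow> monoid (Ms i)" using sysD2 by blast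
lemma psi_hom: "i \<in> I \<Longrightarrow> j \<in> I \<Longrightarrow> leq i j \<Longrightarrow> psi j i \<in> hom (Ms i) (Ms j)"
  using sysD3 by blast
lemma psi_mult: "i \<in> I \<Longrightarrow> j \<in> I \<Longrightarrow> leq i j \<Longrightarrow> x \<in> carrier (Ms i) \<Longrightarrow> y \<in> carrier (Ms i)
   \<Longrightarrow> psi j i (x \<otimes>\<^bsub>Ms i\<^esub> y) = psi j i x \<otimes>\<^bsub>Ms j\<^esub> psi j i y"
  using psi_hom hom_mult by metis
lemma psi_carr: "i \<in> I \<Longrightarrow> j \<in> I \<Longrightarrow> leq i j \<Longrightarrow> x \<in> carrier (Ms i) \<Longrightarrow> psi j i x \<in> carrier (Ms j)"
  using psi_hom hom_in_carrier by metis
lemma psi_one: "i \<in> I \<Longrightarrow> j \<in> I \<Longrightarrow> leq i j \<Longrightarrow> psi j i \<one>\<^bsub>Ms i\<^esub> = \<one>\<^bsub>Ms j\<^esub>"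
  using sysD3 by blast
lemma psi_id: "i \<in> I \<Longrightarrow> x \<in> carrier (Ms i) \<Longrightarrow> psi i i x = x"
  using sysD4 by blast
lemma psi_comp: "i \<in> I \<Longrightarrow> j \<in> I \<Longrightarrow> k \<in> I \<Longrightarrow> leq i j \<Longrightarrow> leq j k \<Longrightarrow> x \<in> carrier (Ms i)
  \<Longrightarrow> psi k j (psi j i x) = psi k i x"
  using sysD5 by blast
lemma dirD: "I \<noteq> {}" "\<forall>i \<in> I. leq i i" "\<forall>i \<in> I. \<forall>j \<in> I. \<forall>k \<in> I. leq i j \<longrightarrow> leq j k \<longrightarrow> leq i k"
     "\<forall>i \<in> I. \<forall>j \<in> I. \<exists>k \<in> I. leq i k \<and> leq j k"
  using dsD1[OF dir] dsD2[OF dir] dsD3[OF dir] dsD4[OF dir] by blast+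
lemma lrefl: "i \<in> I \<Longrightarrow> leq i i" using dirD(2) by blast
lemma ltrans: "i \<in> I \<Longrightarrow> j \<in> I \<Longrightarrow> k \<in> I \<Longrightarrow> leq i j \<Longrightarrow> leq j k \<Longrightarrow> leq i k"
  using dirD(3) by blast
lemma ub: "i \<in> I \<Longrightarrow> j \<in> I \<Longrightarrow> \<exists>k\<in>I. leq i k \<and> leq j k"
  using dirD(4) by blast

lemma r_iff: "((i,x),(j,y)) \<in> r \<longleftrightarrow> i \<in> I \<and> j \<in> I \<and> x \<in> carrier (Ms i) \<and> y \<in> carrier (Ms j) \<and>
       (\<exists>l \<in> I. leq i l \<and> leq j l \<and> psi l i x = psi l j y)"
  unfolding dlim_rel_def by auto

lemma equiv_r: "equiv SG r"
proof (rule equivI)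
  show sub: "r \<subseteq> SG \<times> SG" unfolding dlim_rel_def by blast
  show "refl_on SG r"
  proof (rule refl_onI)
    fix a assume "a \<in> SG"
    then obtain i x where a: "a = (i,x)" "i \<in> I" "x \<in> carrier (Ms i)" by blast
    have "leq i i" using lrefl a(2) .
    hence "((i,x),(i,x)) \<in> r" unfolding r_iff using a by blast
    thus "(a,a) \<in> r" using a by simp
  qed
  show "sym r"
  proof (rule symI)
    fix a b assume "(a,b) \<in> r"
    thus "(b,a) \<in> r" unfolding dlim_rel_def by (cases a, cases b) auto
  qed
  show "trans r"
  proof (rule transI)
    fix a b c assume ab: "(a,b) \<in> r" and bc: "(b,c) \<in> r"
    obtain i x j y k z where abc: "a = (i,x)" "b = (j,y)" "c = (k,z)" by (cases a, cases b, cases c) auto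
    from ab obtain l1 where l1: "l1 \<in> I" "leq i l1" "leq j l1" "psi l1 i x = psi l1 j y"
      and c1: "i \<in> I" "j \<in> I" "x \<in> carrier (Ms i)" "y \<in> carrier (Ms j)"
      unfolding abc r_iff by blast
    from bc obtain l2 where l2: "l2 \<in> I" "leq j l2" "leq k l2" "psi l2 j y = psi l2 k z"
      and c2: "k \<in> I" "z \<in> carrier (Ms k)"
      unfolding abc r_iff by blast
    obtain n where n: "n \<in> I" "leq l1 n" "leq l2 n" using ub l1(1) l2(1) by blast
    have "psi n i x = psi n l1 (psi l1 i x)" using psi_comp[of i l1 n x] l1 c1 n by simp
    also have "\<dots> = psi n l1 (psi l1 j y)" using l1 by simp
    also have "\<dots> = psi n j y" using psi_comp[of j l1 n y] l1 c1 n by simp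
    also have "\<dots> = psi n l2 (psi l2 j y)" using psi_comp[of j l2 n y] l2 c1 n by simp
    also have "\<dots> = psi n l2 (psi l2 k z)" using l2 by simp
    also have "\<dots> = psi n k z" using psi_comp[of k l2 n z] l2 c2 n by simp
    finally have eq: "psi n i x = psi n k z" .
    have li: "leq i n" using ltrans[of i l1 n] c1 l1 n by simp
    have lk: "leq k n" using ltrans[of k l2 n] c2 l2 n by simp
    have ex: "\<exists>l\<in>I. leq i l \<and> leq k l \<and> psi l i x = psi l k z" using n li lk eq by blast
    have "((i,x),(k,z)) \<in> r" unfolding r_iff using ex c1 c2 by simp
    thus "(a,c) \<in> r" using abc by simp
  qed
qed

lemma lift: "i \<in> I \<Longrightarrow> x \<in> carrier (Ms i) \<Longrightarrow> l \<in> I \<Longrightarrow> leq i l \<Longrightarrow> ((i,x),(l,psi l i x)) \<in> r"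
proof -
  assume a: "i \<in> I" "x \<in> carrier (Ms i)" "l \<in> I" "leq i l"
  have c: "psi l i x \<in> carrier (Ms l)" using psi_carr a by blast
  have e: "psi l l (psi l i x) = psi l i x" using psi_id[OF a(3) c] .
  have ll: "leq l l" using lrefl a(3) .
  show ?thesis unfolding r_iff using a c e ll by auto
qed

lemma carrL: "carrier L = SG // r" unfolding dlim_def by simp

lemma class_eq: "A \<in> carrier L \<Longrightarrow> a \<in> A \<Longrightarrow> A = r``{a}"
proof -
  assume A: "A \<in> carrier L" and a: "a \<in> A"
  obtain a0 where a0: "A = r``{a0}" "a0 \<in> SG" using A unfolding carrL by (auto elim!: quotientE)
  have "(a0,a) \<in> r" using a a0 by simp
  thus ?thesis using a0 equiv_class_eq_iff[OF equiv_r] by simp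
qed

lemma class_sub: "A \<in> carrier L \<Longrightarrow> A \<subseteq> SG"
  unfolding carrL using equiv_r in_quotient_imp_subset by blast

lemma class_closed: "A \<in> carrier L \<Longrightarrow> a \<in> A \<Longrightarrow> (a,b) \<in> r \<Longrightarrow> b \<in> A"
  using class_eq by blast

lemma class_carr: "i \<in> I \<Longrightarrow> x \<in> carrier (Ms i) \<Longrightarrow> r``{(i,x)} \<in> carrier L"
  unfolding dlim_def by (simp add: quotientI)

lemma class_self: "i \<in> I \<Longrightarrow> x \<in> carrier (Ms i) \<Longrightarrow> (i,x) \<in> r``{(i,x)}"
  using equiv_class_self[OF equiv_r] by auto

lemma class_nonempty: "A \<in> carrier L \<Longrightarrow> \<exists>i x. i \<in> I \<and> x \<in> carrier (Ms i) \<and> A = r``{(i,x)}"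
  unfolding dlim_def by (auto elim!: quotientE)

lemma class_rep_at: "A \<in> carrier L \<Longrightarrow> (i,x) \<in> A \<Longrightarrow> l \<in> I \<Longrightarrow> leq i l \<Longrightarrow> (l, psi l i x) \<in> A"
proof -
  assume A: "A \<in> carrier L" and ix: "(i,x) \<in> A" and l: "l \<in> I" "leq i l"
  have "(i,x) \<in> SG" using class_sub[OF A] ix by blast
  hence "i \<in> I" "x \<in> carrier (Ms i)" by auto
  hence "((i,x),(l,psi l i x)) \<in> r" using lift l by blast
  thus ?thesis using class_closed[OF A ix] by blast
qed

lemma mult_class:
  assumes l: "l \<in> I" and u: "u \<in> carrier (Ms l)" and v: "v \<in> carrier (Ms l)"
  shows "mult L (r``{(l,u)}) (r``{(l,v)}) = r``{(l, u \<otimes>\<^bsub>Ms l\<^esub> v)}"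
proof -
  define A where "A = r``{(l,u)}"
  define B where "B = r``{(l,v)}"
  define P where "P = (\<lambda>C. \<exists>i x j y l'. (i, x) \<in> A \<and> (j, y) \<in> B \<and> l' \<in> I \<and> leq i l' \<and> leq j l' \<and>
                 C = r `` {(l', psi l' i x \<otimes>\<^bsub>Ms l'\<^esub> psi l' j y)})"
  have m: "mult L A B = (SOME C. P C)" unfolding P_def dlim_def by simp
  have ll: "leq l l" using lrefl l .
  have "P (r``{(l, psi l l u \<otimes>\<^bsub>Ms l\<^esub> psi l l v)})"
    unfolding P_def A_def B_def using class_self[OF l u] class_self[OF l v] l ll by blast
  hence "P (SOME C. P C)" by (rule someI)
  then obtain i x j y l' where ix: "(i, x) \<in> A" and jy: "(j, y) \<in> B" and l': "l' \<in> I" "leq i l'" "leq j l'"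
    and C: "(SOME C. P C) = r `` {(l', psi l' i x \<otimes>\<^bsub>Ms l'\<^esub> psi l' j y)}"
    unfolding P_def by blast
  from ix have "((l,u),(i,x)) \<in> r" unfolding A_def by simp
  then obtain m1 where i: "i \<in> I" "x \<in> carrier (Ms i)" and m1: "m1 \<in> I" "leq l m1" "leq i m1" "psi m1 l u = psi m1 i x"
    unfolding r_iff by blast
  from jy have "((l,v),(j,y)) \<in> r" unfolding B_def by simp
  then obtain m2 where j: "j \<in> I" "y \<in> carrier (Ms j)" and m2: "m2 \<in> I" "leq l m2" "leq j m2" "psi m2 l v = psi m2 j y"
    unfolding r_iff by blast
  obtain n1 where n1: "n1 \<in> I" "leq m1 n1" "leq m2 n1" using ub[OF m1(1) m2(1)] by blast
  obtain n where n: "n \<in> I" "leq n1 n" "leq l' n" using ub[OF n1(1) l'(1)] by blast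
  have m1n: "leq m1 n" using ltrans[OF m1(1) n1(1) n(1)] n1 n by blast
  have m2n: "leq m2 n" using ltrans[OF m2(1) n1(1) n(1)] n1 n by blast
  have ln: "leq l n" using ltrans[OF l m1(1) n(1)] m1 m1n by blast
  have in_: "leq i n" using ltrans[OF i(1) m1(1) n(1)] m1 m1n by blast
  have jn: "leq j n" using ltrans[OF j(1) m2(1) n(1)] m2 m2n by blast
  have cx: "psi l' i x \<in> carrier (Ms l')" using psi_carr i l' by blast
  have cy: "psi l' j y \<in> carrier (Ms l')" using psi_carr j l' by blast
  have mon': "monoid (Ms l')" using mon l' by blast
  have monl: "monoid (Ms l)" using mon l by blast
  have cxy: "psi l' i x \<otimes>\<^bsub>Ms l'\<^esub> psi l' j y \<in> carrier (Ms l')" using monoid.m_closed[OF mon' cx cy] .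
  have cuv: "u \<otimes>\<^bsub>Ms l\<^esub> v \<in> carrier (Ms l)" using monoid.m_closed[OF monl u v] .
  have "psi n l' (psi l' i x \<otimes>\<^bsub>Ms l'\<^esub> psi l' j y) = psi n l' (psi l' i x) \<otimes>\<^bsub>Ms n\<^esub> psi n l' (psi l' j y)"
    using psi_mult[OF l'(1) n(1) n(3) cx cy] .
  also have "\<dots> = psi n i x \<otimes>\<^bsub>Ms n\<^esub> psi n j y"
    using psi_comp[OF i(1) l'(1) n(1) l'(2) n(3) i(2)] psi_comp[OF j(1) l'(1) n(1) l'(3) n(3) j(2)] by simp
  also have "\<dots> = psi n m1 (psi m1 i x) \<otimes>\<^bsub>Ms n\<^esub> psi n m2 (psi m2 j y)"
    using psi_comp[OF i(1) m1(1) n(1) m1(3) m1n i(2)] psi_comp[OF j(1) m2(1) n(1) m2(3) m2n j(2)] by simp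
  also have "\<dots> = psi n m1 (psi m1 l u) \<otimes>\<^bsub>Ms n\<^esub> psi n m2 (psi m2 l v)"
    using m1(4) m2(4) by simp
  also have "\<dots> = psi n l u \<otimes>\<^bsub>Ms n\<^esub> psi n l v"
    using psi_comp[OF l m1(1) n(1) m1(2) m1n u] psi_comp[OF l m2(1) n(1) m2(2) m2n v] by simp
  also have "\<dots> = psi n l (u \<otimes>\<^bsub>Ms l\<^esub> v)"
    using psi_mult[OF l n(1) ln u v] by simp
  finally have eq: "psi n l' (psi l' i x \<otimes>\<^bsub>Ms l'\<^esub> psi l' j y) = psi n l (u \<otimes>\<^bsub>Ms l\<^esub> v)" .
  have "((l', psi l' i x \<otimes>\<^bsub>Ms l'\<^esub> psi l' j y), (l, u \<otimes>\<^bsub>Ms l\<^esub> v)) \<in> r"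
    unfolding r_iff using l'(1) l cxy cuv n(1) n(3) ln eq by blast
  hence "r `` {(l', psi l' i x \<otimes>\<^bsub>Ms l'\<^esub> psi l' j y)} = r``{(l, u \<otimes>\<^bsub>Ms l\<^esub> v)}"
    using equiv_class_eq_iff[OF equiv_r] by blast
  thus ?thesis using m C unfolding A_def B_def by simp
qed

lemma one_class:
  assumes l: "l \<in> I"
  shows "one L = r``{(l, \<one>\<^bsub>Ms l\<^esub>)}"
proof -
  define i0 where "i0 = (SOME i. i \<in> I)"
  have i0: "i0 \<in> I" unfolding i0_def using l by (rule someI)
  have o: "one L = r``{(i0, \<one>\<^bsub>Ms i0\<^esub>)}" unfolding dlim_def i0_def by simp
  obtain n where n: "n \<in> I" "leq i0 n" "leq l n" using ub[OF i0 l] by blast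
  have e: "psi n i0 \<one>\<^bsub>Ms i0\<^esub> = psi n l \<one>\<^bsub>Ms l\<^esub>" using psi_one[OF i0 n(1) n(2)] psi_one[OF l n(1) n(3)] by simp
  have c0: "\<one>\<^bsub>Ms i0\<^esub> \<in> carrier (Ms i0)" using monoid.one_closed mon[OF i0] by blast
  have c1: "\<one>\<^bsub>Ms l\<^esub> \<in> carrier (Ms l)" using monoid.one_closed mon[OF l] by blast
  have "((i0, \<one>\<^bsub>Ms i0\<^esub>), (l, \<one>\<^bsub>Ms l\<^esub>)) \<in> r" unfolding r_iff using i0 l c0 c1 n e by blast
  hence "r``{(i0, \<one>\<^bsub>Ms i0\<^esub>)} = r``{(l, \<one>\<^bsub>Ms l\<^esub>)}" using equiv_class_eq_iff[OF equiv_r] by blast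
  thus ?thesis using o by simp
qed

lemma one_carr: "one L \<in> carrier L"
proof -
  obtain l where l: "l \<in> I" using dsD1[OF dir] by blast
  have c1: "\<one>\<^bsub>Ms l\<^esub> \<in> carrier (Ms l)" using monoid.one_closed mon[OF l] by blast
  show ?thesis using one_class[OF l] class_carr[OF l c1] by simp
qed

lemma r_one_L: "A \<in> carrier L \<Longrightarrow> mult L A (one L) = A"
proof -
  assume A: "A \<in> carrier L"
  obtain i x where ix: "i \<in> I" "x \<in> carrier (Ms i)" "A = r``{(i,x)}" using class_nonempty[OF A] by blast
  have c1: "\<one>\<^bsub>Ms i\<^esub> \<in> carrier (Ms i)" using monoid.one_closed mon[OF ix(1)] by blast
  have "mult L A (one L) = r``{(i, x \<otimes>\<^bsub>Ms i\<^esub> \<one>\<^bsub>Ms i\<^esub>)}"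
    using mult_class[OF ix(1) ix(2) c1] one_class[OF ix(1)] ix(3) by simp
  also have "\<dots> = A" using monoid.r_one[OF mon[OF ix(1)] ix(2)] ix(3) by simp
  finally show ?thesis .
qed

lemma key:
  assumes finT: "finite T" and subT: "T \<subseteq> carrier L"
  shows "\<exists>l\<in>I. \<exists>y. (\<forall>A\<in>T. (l, y A) \<in> A) \<and>
           (\<forall>A\<in>T. \<forall>B\<in>T. mult L A B \<in> T \<longrightarrow> y (mult L A B) = y A \<otimes>\<^bsub>Ms l\<^esub> y B) \<and>
           (one L \<in> T \<longrightarrow> y (one L) = \<one>\<^bsub>Ms l\<^esub>)"
proof -
  have ex1: "\<forall>A\<in>T. \<exists>m\<in>I. \<exists>u. (m,u) \<in> A"
  proof
    fix A assume "A \<in> T"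
    hence A: "A \<in> carrier L" using subT by blast
    obtain i x where ix: "i \<in> I" "x \<in> carrier (Ms i)" "A = r``{(i,x)}" using class_nonempty[OF A] by blast
    show "\<exists>m\<in>I. \<exists>u. (m,u) \<in> A" using class_self[OF ix(1) ix(2)] ix by blast
  qed
  have up1: "\<forall>A\<in>T. \<forall>m\<in>I. \<forall>n\<in>I. (\<exists>u. (m,u) \<in> A) \<longrightarrow> leq m n \<longrightarrow> (\<exists>u. (n,u) \<in> A)"
  proof (intro ballI impI)
    fix A m n assume A: "A \<in> T" and mn: "m \<in> I" "n \<in> I" and "\<exists>u. (m,u) \<in> A" and le: "leq m n"
    then obtain u where u: "(m,u) \<in> A" by blast
    have "(n, psi n m u) \<in> A" using class_rep_at[OF _ u mn(2) le] A subT by blast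
    thus "\<exists>u. (n,u) \<in> A" by blast
  qed
  obtain l0 where l0: "l0 \<in> I" and l0A: "\<forall>A\<in>T. \<exists>u. (l0,u) \<in> A"
    using directed_finite[OF dir finT ex1 up1] by blast
  define u :: "('i \<times> 'a) set \<Rightarrow> 'a" where "u A = (SOME u. (l0,u) \<in> A)" for A
  have uA: "(l0, u A) \<in> A" if "A \<in> T" for A
    unfolding u_def using l0A that someI_ex by metis
  have uc: "u A \<in> carrier (Ms l0)" if "A \<in> T" for A
    using class_sub[of A] uA[OF that] that subT by blast
  have uclass: "A = r``{(l0, u A)}" if "A \<in> T" for A
    using class_eq[of A] uA[OF that] that subT by blast
  define P1 where "P1 = (\<lambda>(A,B). (u A \<otimes>\<^bsub>Ms l0\<^esub> u B, u (mult L A B))) ` {(A,B). A \<in> T \<and> B \<in> T \<and> mult L A B \<in> T}"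
  define P2 where "P2 = (\<lambda>C. (\<one>\<^bsub>Ms l0\<^esub>, u C)) ` {C. C \<in> T \<and> C = one L}"
  define P where "P = insert (\<one>\<^bsub>Ms l0\<^esub>, \<one>\<^bsub>Ms l0\<^esub>) (P1 \<union> P2)"
  have finP: "finite P"
  proof -
    have "{(A,B). A \<in> T \<and> B \<in> T \<and> mult L A B \<in> T} \<subseteq> T \<times> T" by blast
    hence "finite {(A,B). A \<in> T \<and> B \<in> T \<and> mult L A B \<in> T}" using finT finite_subset by blast
    hence "finite P1" unfolding P1_def by blast
    moreover have "finite P2" unfolding P2_def using finT by simp
    ultimately show ?thesis unfolding P_def by simp
  qed
  have monl0: "monoid (Ms l0)" using mon l0 by blast
  have c1: "\<one>\<^bsub>Ms l0\<^esub> \<in> carrier (Ms l0)" using monoid.one_closed[OF monl0] .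
  have relP: "((l0, fst p), (l0, snd p)) \<in> r" if "p \<in> P" for p
  proof -
    have "p = (\<one>\<^bsub>Ms l0\<^esub>, \<one>\<^bsub>Ms l0\<^esub>) \<or> p \<in> P1 \<or> p \<in> P2" using that unfolding P_def by blast
    moreover
    { assume p: "p = (\<one>\<^bsub>Ms l0\<^esub>, \<one>\<^bsub>Ms l0\<^esub>)"
      have "((l0, \<one>\<^bsub>Ms l0\<^esub>), (l0, \<one>\<^bsub>Ms l0\<^esub>)) \<in> r" unfolding r_iff using l0 c1 lrefl[OF l0] by blast
      hence ?thesis using p by simp }
    moreover
    { assume "p \<in> P1"
      then obtain AB where ABin: "AB \<in> {(A,B). A \<in> T \<and> B \<in> T \<and> mult L A B \<in> T}"
          and pAB: "p = (\<lambda>(A,B). (u A \<otimes>\<^bsub>Ms l0\<^esub> u B, u (mult L A B))) AB"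
        unfolding P1_def by (rule imageE)
      obtain A B where ABe: "AB = (A,B)" by (cases AB)
      have AB: "A \<in> T" "B \<in> T" "mult L A B \<in> T" using ABin ABe by auto
      have p: "p = (u A \<otimes>\<^bsub>Ms l0\<^esub> u B, u (mult L A B))" using pAB ABe by simp
      have "mult L A B = mult L (r``{(l0, u A)}) (r``{(l0, u B)})"
        by (rule arg_cong2[where f="mult L"], rule uclass[OF AB(1)], rule uclass[OF AB(2)])
      also have "\<dots> = r``{(l0, u A \<otimes>\<^bsub>Ms l0\<^esub> u B)}"
        using mult_class[OF l0 uc[OF AB(1)] uc[OF AB(2)]] .
      finally have "(l0, u (mult L A B)) \<in> r``{(l0, u A \<otimes>\<^bsub>Ms l0\<^esub> u B)}" using uA[OF AB(3)] by simp
      hence ?thesis using p by simp }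
    moreover
    { assume "p \<in> P2"
      then obtain C where C: "C \<in> {C. C \<in> T \<and> C = one L}" and p: "p = (\<one>\<^bsub>Ms l0\<^esub>, u C)"
        unfolding P2_def by (rule imageE)
      have C1: "C \<in> T" and C2: "C = one L" using C by auto
      have "(l0, u C) \<in> C" using uA[OF C1] .
      hence "(l0, u C) \<in> r``{(l0, \<one>\<^bsub>Ms l0\<^esub>)}" using one_class[OF l0] C2 by simp
      hence ?thesis using p by simp }
    ultimately show ?thesis by blast
  qed
  define Q where "Q p m = (leq l0 m \<and> psi m l0 (fst p) = psi m l0 (snd p))" for p :: "'a \<times> 'a" and m
  have ex2: "\<forall>p\<in>P. \<exists>m\<in>I. Q p m"
  proof
    fix p assume "p \<in> P"
    from relP[OF this] show "\<exists>m\<in>I. Q p m" unfolding r_iff Q_def by blast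
  qed
  have up2: "\<forall>p\<in>P. \<forall>m\<in>I. \<forall>n\<in>I. Q p m \<longrightarrow> leq m n \<longrightarrow> Q p n"
  proof (intro ballI impI)
    fix p m n assume p: "p \<in> P" and mn: "m \<in> I" "n \<in> I" and Qm: "Q p m" and le: "leq m n"
    have rp: "((l0, fst p), (l0, snd p)) \<in> r" using relP[OF p] .
    have cf: "fst p \<in> carrier (Ms l0)" and cs: "snd p \<in> carrier (Ms l0)" using rp unfolding r_iff by blast+
    have l0m: "leq l0 m" and e: "psi m l0 (fst p) = psi m l0 (snd p)" using Qm unfolding Q_def by blast+
    have l0n: "leq l0 n" using ltrans[OF l0 mn(1) mn(2) l0m le] .
    have "psi n l0 (fst p) = psi n m (psi m l0 (fst p))" using psi_comp[OF l0 mn(1) mn(2) l0m le cf] by simp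
    also have "\<dots> = psi n m (psi m l0 (snd p))" using e by simp
    also have "\<dots> = psi n l0 (snd p)" using psi_comp[OF l0 mn(1) mn(2) l0m le cs] by simp
    finally show "Q p n" unfolding Q_def using l0n by blast
  qed
  obtain l where l: "l \<in> I" and lQ: "\<forall>p\<in>P. Q p l" using directed_finite[OF dir finP ex2 up2] by blast
  have l0l: "leq l0 l" using lQ unfolding Q_def P_def by blast
  define y where "y A = psi l l0 (u A)" for A
  have "\<forall>A\<in>T. (l, y A) \<in> A"
  proof
    fix A assume A: "A \<in> T"
    show "(l, y A) \<in> A" unfolding y_def using class_rep_at[OF _ uA[OF A] l l0l] A subT by blast
  qed
  moreover have "\<forall>A\<in>T. \<forall>B\<in>T. mult L A B \<in> T \<longrightarrow> y (mult L A B) = y A \<otimes>\<^bsub>Ms l\<^esub> y B"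
  proof (intro ballI impI)
    fix A B assume A: "A \<in> T" and B: "B \<in> T" and AB: "mult L A B \<in> T"
    have "(u A \<otimes>\<^bsub>Ms l0\<^esub> u B, u (mult L A B)) \<in> P1" unfolding P1_def
      using A B AB by (intro image_eqI[where x="(A,B)"]) auto
    hence "(u A \<otimes>\<^bsub>Ms l0\<^esub> u B, u (mult L A B)) \<in> P" unfolding P_def by blast
    hence "psi l l0 (u A \<otimes>\<^bsub>Ms l0\<^esub> u B) = psi l l0 (u (mult L A B))" using lQ unfolding Q_def by auto
    moreover have "psi l l0 (u A \<otimes>\<^bsub>Ms l0\<^esub> u B) = y A \<otimes>\<^bsub>Ms l\<^esub> y B"
      unfolding y_def using psi_mult[OF l0 l l0l uc[OF A] uc[OF B]] .
    ultimately show "y (mult L A B) = y A \<otimes>\<^bsub>Ms l\<^esub> y B" unfolding y_def by simp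
  qed
  moreover have "one L \<in> T \<longrightarrow> y (one L) = \<one>\<^bsub>Ms l\<^esub>"
  proof
    assume o: "one L \<in> T"
    have "(\<one>\<^bsub>Ms l0\<^esub>, u (one L)) \<in> P" unfolding P_def P2_def using o by blast
    hence "psi l l0 \<one>\<^bsub>Ms l0\<^esub> = psi l l0 (u (one L))" using lQ unfolding Q_def by auto
    thus "y (one L) = \<one>\<^bsub>Ms l\<^esub>" unfolding y_def using psi_one[OF l0 l l0l] by simp
  qed
  ultimately show ?thesis using l by blast
qed

end

theorem proposition3p11:
  fixes I :: "'i set" and leq :: "'i \<Rightarrow> 'i \<Rightarrow> bool"
    and Ms :: "'i \<Rightarrow> 'a monoid" and psi :: "'i \<Rightarrow> 'i \<Rightarrow> 'a \<Rightarrow> 'a"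
    and M :: "'b monoid"
  assumes "inductive_system I leq Ms psi"
    and "\<forall>i \<in> I. strongly_sofic (Ms i)"
    and "monoid M"
    and "M \<cong> dlim I leq Ms psi"
  shows "strongly_sofic M"
proof -
  interpret isys I leq Ms psi by (unfold_locales) (rule assms(1))
  note monM = assms(3)
  obtain h where h: "h \<in> iso M L" using assms(4) unfolding is_iso_def by blast
  have hhom: "h \<in> hom M L" and hbij: "bij_betw h (carrier M) (carrier L)" using h unfolding iso_def by simp_all
  have hinj: "inj_on h (carrier M)" using bij_betw_imp_inj_on[OF hbij] .
  have hsurj: "h ` carrier M = carrier L" using bij_betw_imp_surj_on[OF hbij] .
  have hc: "h m \<in> carrier L" if "m \<in> carrier M" for m using hom_in_carrier[OF hhom that] .
  have h1: "h \<one>\<^bsub>M\<^esub> = one L"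
  proof -
    have o1: "\<one>\<^bsub>M\<^esub> \<in> carrier M" using monoid.one_closed[OF monM] .
    have "one L \<in> h ` carrier M" using one_carr hsurj by simp
    then obtain m0 where m0: "one L = h m0" "m0 \<in> carrier M" by (rule imageE)
    have m: "m0 \<in> carrier M" "h m0 = one L" using m0 by simp_all
    have "mult L (h \<one>\<^bsub>M\<^esub>) (one L) = h (\<one>\<^bsub>M\<^esub> \<otimes>\<^bsub>M\<^esub> m0)" using hom_mult[OF hhom o1 m(1)] m(2) by simp
    also have "\<dots> = one L" using monoid.l_one[OF monM m(1)] m(2) by simp
    finally have a: "mult L (h \<one>\<^bsub>M\<^esub>) (one L) = one L" .
    have "mult L (h \<one>\<^bsub>M\<^esub>) (one L) = h \<one>\<^bsub>M\<^esub>" using r_one_L[OF hc[OF o1]] .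
    thus ?thesis using a by simp
  qed
  show ?thesis unfolding strongly_sofic_def
  proof (intro allI impI)
    fix K assume K: "finite K \<and> K \<subseteq> carrier M"
    define S where "S = K \<union> (\<lambda>(a,b). a \<otimes>\<^bsub>M\<^esub> b) ` (K \<times> K) \<union> {\<one>\<^bsub>M\<^esub>}"
    have finS: "finite S" unfolding S_def using K by simp
    have subS: "S \<subseteq> carrier M" unfolding S_def using K monoid.m_closed[OF monM] monoid.one_closed[OF monM] by auto
    have KS: "K \<subseteq> S" unfolding S_def by blast
    have KKS: "k1 \<otimes>\<^bsub>M\<^esub> k2 \<in> S" if "k1 \<in> K" "k2 \<in> K" for k1 k2
      unfolding S_def using that by (intro UnI1 UnI2 image_eqI[where x="(k1,k2)"]) auto
    have oS: "\<one>\<^bsub>M\<^esub> \<in> S" unfolding S_def by blast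
    define T where "T = h ` S"
    have finT: "finite T" unfolding T_def using finS by simp
    have subT: "T \<subseteq> carrier L" unfolding T_def using subS hc by blast
    obtain l y where l: "l \<in> I" and yA: "\<forall>A\<in>T. (l, y A) \<in> A"
      and ymul: "\<forall>A\<in>T. \<forall>B\<in>T. mult L A B \<in> T \<longrightarrow> y (mult L A B) = y A \<otimes>\<^bsub>Ms l\<^esub> y B"
      and yone: "one L \<in> T \<longrightarrow> y (one L) = \<one>\<^bsub>Ms l\<^esub>"
      using key[OF finT subT] by blast
    define x where "x m = y (h m)" for m
    have xin: "(l, x m) \<in> h m" if "m \<in> S" for m
      unfolding x_def using yA that unfolding T_def by blast
    have xc: "x m \<in> carrier (Ms l)" if "m \<in> S" for m
    proof -
      have "(l, x m) \<in> SG" using class_sub[OF hc] xin[OF that] subS that by blast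
      thus ?thesis by blast
    qed
    have xmul: "x (k1 \<otimes>\<^bsub>M\<^esub> k2) = x k1 \<otimes>\<^bsub>Ms l\<^esub> x k2" if k: "k1 \<in> K" "k2 \<in> K" for k1 k2
    proof -
      have k1M: "k1 \<in> carrier M" and k2M: "k2 \<in> carrier M" using k K by auto
      have e: "h (k1 \<otimes>\<^bsub>M\<^esub> k2) = mult L (h k1) (h k2)" using hom_mult[OF hhom k1M k2M] .
      have "h k1 \<in> T" "h k2 \<in> T" "h (k1 \<otimes>\<^bsub>M\<^esub> k2) \<in> T" unfolding T_def using KS k KKS[OF k] by auto
      thus ?thesis unfolding x_def using ymul e by simp
    qed
    have xone: "x \<one>\<^bsub>M\<^esub> = \<one>\<^bsub>Ms l\<^esub>"
    proof -
      have "one L \<in> T" unfolding T_def using oS h1 by (metis imageI)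
      thus ?thesis unfolding x_def using yone h1 by simp
    qed
    have xinj: "k1 = k2" if k: "k1 \<in> S" "k2 \<in> S" "x k1 = x k2" for k1 k2
    proof -
      have "h k1 = r``{(l, x k1)}" using class_eq[OF hc xin[OF k(1)]] subS k by blast
      moreover have "h k2 = r``{(l, x k2)}" using class_eq[OF hc xin[OF k(2)]] subS k by blast
      ultimately have "h k1 = h k2" using k(3) by simp
      thus ?thesis using hinj subS k unfolding inj_on_def by blast
    qed
    define Kl where "Kl = x ` K"
    have finKl: "finite Kl" unfolding Kl_def using K by simp
    have subKl: "Kl \<subseteq> carrier (Ms l)" unfolding Kl_def using xc KS by blast
    have ssl: "strongly_sofic (Ms l)" using assms(2) l by blast
    have "finite Kl \<and> Kl \<subseteq> carrier (Ms l) \<longrightarrow>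
        (\<exists>\<Delta>::nat. \<Delta> \<ge> 1 \<and>
          (\<forall>\<epsilon>::real. \<epsilon> > 0 \<longrightarrow>
            (\<exists>(D::nat set) (\<sigma>::'a \<Rightarrow> nat \<Rightarrow> nat).
               finite D \<and> D \<noteq> {} \<and>
               (\<forall>m \<in> carrier (Ms l). \<sigma> m \<in> D \<rightarrow>\<^sub>E D) \<and>
               \<sigma> \<one>\<^bsub>Ms l\<^esub> = restrict id D \<and>
               (\<forall>k1 \<in> Kl. \<forall>k2 \<in> Kl.
                  ham_dist D (\<sigma> (k1 \<otimes>\<^bsub>Ms l\<^esub> k2)) (\<sigma> k1 \<circ> \<sigma> k2) \<le> \<epsilon>) \<and>
               (\<forall>k1 \<in> Kl. \<forall>k2 \<in> Kl. k1 \<noteq> k2 \<longrightarrow>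
                  ham_dist D (\<sigma> k1) (\<sigma> k2) \<ge> 1 - \<epsilon>) \<and>
               (\<forall>k \<in> Kl. \<forall>v \<in> D. card {u \<in> D. \<sigma> k u = v} \<le> \<Delta>))))"
      using ssl unfolding strongly_sofic_def by (rule spec)
    hence "\<exists>\<Delta>::nat. \<Delta> \<ge> 1 \<and>
          (\<forall>\<epsilon>::real. \<epsilon> > 0 \<longrightarrow>
            (\<exists>(D::nat set) (\<sigma>::'a \<Rightarrow> nat \<Rightarrow> nat).
               finite D \<and> D \<noteq> {} \<and>
               (\<forall>m \<in> carrier (Ms l). \<sigma> m \<in> D \<rightarrow>\<^sub>E D) \<and>
               \<sigma> \<one>\<^bsub>Ms l\<^esub> = restrict id D \<and>
               (\<forall>k1 \<in> Kl. \<forall>k2 \<in> Kl.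
                  ham_dist D (\<sigma> (k1 \<otimes>\<^bsub>Ms l\<^esub> k2)) (\<sigma> k1 \<circ> \<sigma> k2) \<le> \<epsilon>) \<and>
               (\<forall>k1 \<in> Kl. \<forall>k2 \<in> Kl. k1 \<noteq> k2 \<longrightarrow>
                  ham_dist D (\<sigma> k1) (\<sigma> k2) \<ge> 1 - \<epsilon>) \<and>
               (\<forall>k \<in> Kl. \<forall>v \<in> D. card {u \<in> D. \<sigma> k u = v} \<le> \<Delta>)))"
      using finKl subKl by blast
    then obtain \<Delta> :: nat where \<Delta>1: "\<Delta> \<ge> 1" and \<Delta>H: "\<forall>\<epsilon>::real. \<epsilon> > 0 \<longrightarrow>
            (\<exists>(D::nat set) (\<sigma>::'a \<Rightarrow> nat \<Rightarrow> nat).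
               finite D \<and> D \<noteq> {} \<and>
               (\<forall>m \<in> carrier (Ms l). \<sigma> m \<in> D \<rightarrow>\<^sub>E D) \<and>
               \<sigma> \<one>\<^bsub>Ms l\<^esub> = restrict id D \<and>
               (\<forall>k1 \<in> Kl. \<forall>k2 \<in> Kl.
                  ham_dist D (\<sigma> (k1 \<otimes>\<^bsub>Ms l\<^esub> k2)) (\<sigma> k1 \<circ> \<sigma> k2) \<le> \<epsilon>) \<and>
               (\<forall>k1 \<in> Kl. \<forall>k2 \<in> Kl. k1 \<noteq> k2 \<longrightarrow>
                  ham_dist D (\<sigma> k1) (\<sigma> k2) \<ge> 1 - \<epsilon>) \<and>
               (\<forall>k \<in> Kl. \<forall>v \<in> D. card {u \<in> D. \<sigma> k u = v} \<le> \<Delta>))"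
      by blast
    show "\<exists>\<Delta>::nat. \<Delta> \<ge> 1 \<and>
          (\<forall>\<epsilon>::real. \<epsilon> > 0 \<longrightarrow>
            (\<exists>(D::nat set) (\<sigma>::'b \<Rightarrow> nat \<Rightarrow> nat).
               finite D \<and> D \<noteq> {} \<and>
               (\<forall>m \<in> carrier M. \<sigma> m \<in> D \<rightarrow>\<^sub>E D) \<and>
               \<sigma> \<one>\<^bsub>M\<^esub> = restrict id D \<and>
               (\<forall>k1 \<in> K. \<forall>k2 \<in> K.
                  ham_dist D (\<sigma> (k1 \<otimes>\<^bsub>M\<^esub> k2)) (\<sigma> k1 \<circ> \<sigma> k2) \<le> \<epsilon>) \<and>
               (\<forall>k1 \<in> K. \<forall>k2 \<in> K. k1 \<noteq> k2 \<longrightarrow>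
                  ham_dist D (\<sigma> k1) (\<sigma> k2) \<ge> 1 - \<epsilon>) \<and>
               (\<forall>k \<in> K. \<forall>v \<in> D. card {u \<in> D. \<sigma> k u = v} \<le> \<Delta>)))"
    proof (intro exI[of _ \<Delta>] conjI allI impI)
      show "\<Delta> \<ge> 1" using \<Delta>1 .
      fix \<epsilon> :: real assume e: "\<epsilon> > 0"
      obtain D and \<sigma>l :: "'a \<Rightarrow> nat \<Rightarrow> nat" where H: "finite D \<and> D \<noteq> {} \<and>
               (\<forall>m \<in> carrier (Ms l). \<sigma>l m \<in> D \<rightarrow>\<^sub>E D) \<and>
               \<sigma>l \<one>\<^bsub>Ms l\<^esub> = restrict id D \<and>
               (\<forall>k1 \<in> Kl. \<forall>k2 \<in> Kl.
                  ham_dist D (\<sigma>l (k1 \<otimes>\<^bsub>Ms l\<^esub> k2)) (\<sigma>l k1 \<circ> \<sigma>l k2) \<le> \<epsilon>) \<and>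
               (\<forall>k1 \<in> Kl. \<forall>k2 \<in> Kl. k1 \<noteq> k2 \<longrightarrow>
                  ham_dist D (\<sigma>l k1) (\<sigma>l k2) \<ge> 1 - \<epsilon>) \<and>
               (\<forall>k \<in> Kl. \<forall>v \<in> D. card {u \<in> D. \<sigma>l k u = v} \<le> \<Delta>)"
        using \<Delta>H[rule_format, OF e] by (elim exE) (rule that)
      have D1: "finite D" using H by (elim conjE) assumption
      have D2: "D \<noteq> {}" using H by (elim conjE) assumption
      have s1: "\<forall>m \<in> carrier (Ms l). \<sigma>l m \<in> D \<rightarrow>\<^sub>E D" using H by (elim conjE) assumption
      have s2: "\<sigma>l \<one>\<^bsub>Ms l\<^esub> = restrict id D" using H by (elim conjE) assumption
      have s3: "\<forall>k1 \<in> Kl. \<forall>k2 \<in> Kl. ham_dist D (\<sigma>l (k1 \<otimes>\<^bsub>Ms l\<^esub> k2)) (\<sigma>l k1 \<circ> \<sigma>l k2) \<le> \<epsilon>" using H by (elim conjE) assumption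
      have s4: "\<forall>k1 \<in> Kl. \<forall>k2 \<in> Kl. k1 \<noteq> k2 \<longrightarrow> ham_dist D (\<sigma>l k1) (\<sigma>l k2) \<ge> 1 - \<epsilon>" using H by (elim conjE) assumption
      have s5: "\<forall>k \<in> Kl. \<forall>v \<in> D. card {u \<in> D. \<sigma>l k u = v} \<le> \<Delta>" using H by (elim conjE) assumption
      define \<sigma> where "\<sigma> m = (if m \<in> S then \<sigma>l (x m) else restrict id D)" for m
      have \<sigma>K: "\<sigma> k = \<sigma>l (x k)" if "k \<in> K" for k unfolding \<sigma>_def using KS that by auto
      have xKl: "x k \<in> Kl" if "k \<in> K" for k unfolding Kl_def using that by blast
      show "\<exists>(D::nat set) (\<sigma>::'b \<Rightarrow> nat \<Rightarrow> nat).
               finite D \<and> D \<noteq> {} \<and>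
               (\<forall>m \<in> carrier M. \<sigma> m \<in> D \<rightarrow>\<^sub>E D) \<and>
               \<sigma> \<one>\<^bsub>M\<^esub> = restrict id D \<and>
               (\<forall>k1 \<in> K. \<forall>k2 \<in> K.
                  ham_dist D (\<sigma> (k1 \<otimes>\<^bsub>M\<^esub> k2)) (\<sigma> k1 \<circ> \<sigma> k2) \<le> \<epsilon>) \<and>
               (\<forall>k1 \<in> K. \<forall>k2 \<in> K. k1 \<noteq> k2 \<longrightarrow>
                  ham_dist D (\<sigma> k1) (\<sigma> k2) \<ge> 1 - \<epsilon>) \<and>
               (\<forall>k \<in> K. \<forall>v \<in> D. card {u \<in> D. \<sigma> k u = v} \<le> \<Delta>)"
      proof (intro exI[of _ D] exI[of _ \<sigma>] conjI ballI impI)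
        show "finite D" using D1 .
        show "D \<noteq> {}" using D2 .
      next
        fix m assume m: "m \<in> carrier M"
        show "\<sigma> m \<in> D \<rightarrow>\<^sub>E D"
        proof (cases "m \<in> S")
          case True
          then show ?thesis unfolding \<sigma>_def using s1 xc[OF True] by simp
        next
          case False
          have "restrict id D \<in> D \<rightarrow>\<^sub>E D" by auto
          then show ?thesis unfolding \<sigma>_def using False by simp
        qed
      next
        show "\<sigma> \<one>\<^bsub>M\<^esub> = restrict id D" unfolding \<sigma>_def using oS xone s2 by simp
      next
        fix k1 k2 assume k: "k1 \<in> K" "k2 \<in> K"
        have "\<sigma> (k1 \<otimes>\<^bsub>M\<^esub> k2) = \<sigma>l (x k1 \<otimes>\<^bsub>Ms l\<^esub> x k2)"
          unfolding \<sigma>_def using KKS[OF k] xmul[OF k] by simp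
        thus "ham_dist D (\<sigma> (k1 \<otimes>\<^bsub>M\<^esub> k2)) (\<sigma> k1 \<circ> \<sigma> k2) \<le> \<epsilon>"
          using s3 xKl[OF k(1)] xKl[OF k(2)] \<sigma>K[OF k(1)] \<sigma>K[OF k(2)] by simp
      next
        fix k1 k2 assume k: "k1 \<in> K" "k2 \<in> K" and ne: "k1 \<noteq> k2"
        have "x k1 \<noteq> x k2" using xinj KS k ne by blast
        thus "ham_dist D (\<sigma> k1) (\<sigma> k2) \<ge> 1 - \<epsilon>"
          using s4 xKl[OF k(1)] xKl[OF k(2)] \<sigma>K[OF k(1)] \<sigma>K[OF k(2)] by simp
      next
        fix k v assume k: "k \<in> K" and v: "v \<in> D"
        show "card {u \<in> D. \<sigma> k u = v} \<le> \<Delta>" using s5 xKl[OF k] \<sigma>K[OF k] v by simp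
      qed
    qed
  qed
qed

end
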